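(* Let $i(C,R)$ be an initial rule and $\mathrm{H}:=\mathrm{H}(\mathbf{G}(i(C,R)))$. If $\mathrm{H}'$ is a fracturable subset of $\mathrm{H}$ (in $\mathsf{DG}(\mathrm H)$), then $i(C,R)\preceq\ \triangleright^{1} i(C,R)\ominus\mathbf{G}(\mathrm{H}')\ \triangleright^{0}\mathrm{H}'$; i.e. every conclusion of $i(C,R)$ can be derived by one application of $i(C,R)\ominus\mathbf G(\mathrm H')$ followed by zero or more applications of rules from $\mathrm H'$.
   Context: Fix a countably infinite set $\mathtt{S}$ of sequents (atomic labels), a set $\mathcal{U}$ of vertices, and a non-empty finite set $\mathtt{E}$ of edge types. A g-sequent is $\mathcal{G}=(\mathcal{V},\mathcal{E},\mathcal{L})$ with $\mathcal{V}\subseteq\mathcal{U}$, $\mathcal{E}=\{\mathcal{E}_a\mid a\in\mathtt{E}\}$, $\mathcal{E}_a\subseteq\mathcal{V}\times\mathcal{V}$, $\mathcal{L}:\mathcal{V}\to\mathtt{S}$; written $\Gamma\vdash\Delta$ with $\Gamma$ the set of edge atoms $w\mathcal{E}_a u$ and $\Delta$ the set of prefixed sequents $w:S$; $\mathtt{PS}=\mathcal U\times\mathtt S$; commas denote disjoint union. Let $\overline{\mathtt E}=\{\bar a\mid a\in\mathtt E\}$, $\bar{\bar z}=z$, $\overline{x_1\cdots x_n}=\bar x_n\cdots\bar x_1$, $\varepsilon$ empty string. Paths: $\mathcal{G}\models u\xrightarrow{a}w$ iff $(u,w)\in\mathcal{E}_a$; $u\xrightarrow{\bar a}w$ iff $(w,u)\in\mathcal{E}_a$;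 $u\xrightarrow{\varepsilon}w$ iff $u=w$; $u\xrightarrow{xs}w$ iff some $v$ has $u\xrightarrow{x}v$, $v\xrightarrow{s}w$; $u\xrightarrow{\mathscr L}w$ iff $u\xrightarrow{s}w$ for some $s\in\mathscr L$. An $\mathtt E$-system is a finite set $\mathbf G$ of production rules $x\longrightarrow t$ ($x\in\mathtt E\cup\overline{\mathtt E}$) with $x\longrightarrow t\in\mathbf G$ iff $\bar x\longrightarrow\bar t\in\mathbf G$; $\mathbf G(s)=\{t\mid s\longrightarrow^*_{\mathbf G}t\}$. For $p=x\longrightarrow t$, $\bar p=\bar x\longrightarrow\bar t$; $(p,\bar p)$ is a production pair; $P(\mathbf G)$ the set of such pairs. A constraint is a finite tree $C=(V,E,L)$, $V\subseteq\mathcal U$, each edge labelled $L(w,u)=\mathbf G'(a)$ ($a\in\mathtt E$, $\mathbf G'$ an $\mathtt E$-system, said to participate in $C$); $\mathcal G$ satisfies $C$ iff $V\subseteq\mathcal U(\mathcal G)$ and $\mathcal G\models w\xrightarrow{\mathbf G'(a)}u$ for each edge. A sequent constraint $R\subseteq\mathtt S^n\times 2^{\mathtt{PS}}$ is satisfied by $S_1,\dots,S_n,\Delta$ iff $(S_{\pi(1)},\dots,S_{\pi(n)},\Delta)\in R$ for some permutation $\pi$. An initial rule $i(C,R)$ has no premises; its conclusions are the $\Gamma\vdash\Delta=(\mathcal V,\mathcal E,\mathcal L)$ satisfying $C$, with $V=\{w_1,\dots,w_n\}$, such that $\mathcal L(w_1),\dots,\mathcal L(w_n)$ and $\Delta\setminus\{w_i:\mathcal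 L(w_i)\}$ satisfy $R$. $\mathbf G(i(C,R))$ is the union of all $\mathtt E$-systems participating in $C$. Fracture: $C\ominus\mathbf G$ replaces each label $\mathbf G'(a)$ by $(\mathbf G'\setminus\mathbf G)(a)$, and $i(C,R)\ominus\mathbf G=i(C\ominus\mathbf G,R)$. Horn rules: for $s=x_1\cdots x_n$, $w\mathcal E_s u$ abbreviates atoms $w\mathcal E_{x_1}v_1,\dots,v_{n-1}\mathcal E_{x_n}u$ ($v\mathcal E_{\bar a}z$ means $z\mathcal E_a v$; $w\mathcal E_\varepsilon u$ means $w=u$). Forward Horn rule $h_f$: premise $\Gamma,w\mathcal{E}_s u,w\mathcal{E}_a u\vdash\Delta$, conclusion $\Gamma,w\mathcal{E}_s u\vdash\Delta$; backward $h_b$: same with $u\mathcal E_a w$ instead of $w\mathcal E_a u$. $\mathbf{G}(h_f)=\{a\longrightarrow s,\bar a\longrightarrow\bar s\}$, $\mathbf{G}(h_b)=\{\bar a\longrightarrow s,a\longrightarrow\bar s\}$, $\mathbf G(\mathrm H)=\bigcup_{h\in\mathrm H}\mathbf G(h)$. For a pair $(p,\bar p)$ with $p=a\longrightarrow s$ (resp. $\bar a\longrightarrow s$), $a\in\mathtt E$, $\mathrm H(p,\bar p)$ is the corresponding forward (resp. backward) Horn rule; $\mathrm H(\mathbf G)=\bigcup_{(p,\bar p)\in P(\mathbf G)}\mathrm H(p,\bar p)$. Dependency graph: for distinct pairs with $p=x\longrightarrow s$, $p'=y\longrightarrow t$, $(p,\bar p)\sqsubset(p',\bar p')$ iff $s$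 or $\bar s$ contains $y$; $\sqsubseteq$ its reflexive-transitive closure; $\mathsf{DG}(\mathrm H)=(\mathrm H,\sqsubseteq')$ with $h\sqsubseteq'h'$ iff the production pair of $h$ is $\sqsubseteq$ that of $h'$. $V'\subseteq V$ is fracturable in $(V,\sqsubseteq)$ iff no $v\in V'$, $v'\in V\setminus V'$ have $v\sqsubseteq v'$. Simulation: $\mathrm R_1\preceq\mathrm R_2$ iff whatever is derivable from given g-sequents using $\mathrm R_1$ is derivable from them using $\mathrm R_2$. An ordered rule set $\triangleright^{i_1}\mathrm R_1\cdots\triangleright^{i_k}\mathrm R_k$ ($i_j\in\{0,1\}$) is $\mathrm R_1\cup\dots\cup\mathrm R_k$ restricted to derivations that (top to bottom) first apply at least $i_1$ rules from $\mathrm R_1$, then at least $i_2$ rules from $\mathrm R_2$, etc. *)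

theory Defs
  imports Main "HOL-Library.Multiset" "HOL-Library.Countable"
begin

text \<open>Letters of E \<union> E-bar: Fwd a stands for a, Bwd a for a-bar.\<close>
datatype 'e letter = Fwd 'e | Bwd 'e

fun barl :: "'e letter \<Rightarrow> 'e letter" where
  "barl (Fwd a) = Bwd a" | "barl (Bwd a) = Fwd a"

definition bars :: "'e letter list \<Rightarrow> 'e letter list" where
  "bars s = rev (map barl s)"

type_synonym 'e production = "'e letter \<times> 'e letter list"

definition is_Esys :: "'e production set \<Rightarrow> bool" where
  "is_Esys G \<longleftrightarrow> finite G \<and> (\<forall>x t. (x, t) \<in> G \<longrightarrow> (barl x, bars t) \<in> G)"

definition rw_step :: "'e production set \<Rightarrow> 'e letter list \<Rightarrow> 'e letter list \<Rightarrow> bool" where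
  "rw_step G s t \<longleftrightarrow> (\<exists>xs x ys r. s = xs @ [x] @ ys \<and> (x, r) \<in> G \<and> t = xs @ r @ ys)"

definition lang :: "'e production set \<Rightarrow> 'e letter list \<Rightarrow> 'e letter list set" where
  "lang G s = {t. (rw_step G)\<^sup>*\<^sup>* s t}"

record ('u, 'e, 's) gseq =
  gV :: "'u set"
  gE :: "'e \<Rightarrow> ('u \<times> 'u) set"
  gL :: "'u \<Rightarrow> 's"

definition gseq_wf :: "('u, 'e, 's) gseq \<Rightarrow> bool" where
  "gseq_wf G \<longleftrightarrow> (\<forall>a. gE G a \<subseteq> gV G \<times> gV G)"

definition Delta :: "('u, 'e, 's) gseq \<Rightarrow> ('u \<times> 's) set" where
  "Delta G = {(w, gL G w) | w. w \<in> gV G}"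

fun lstep :: "('u, 'e, 's) gseq \<Rightarrow> 'u \<Rightarrow> 'e letter \<Rightarrow> 'u \<Rightarrow> bool" where
  "lstep G u (Fwd a) w \<longleftrightarrow> (u, w) \<in> gE G a"
| "lstep G u (Bwd a) w \<longleftrightarrow> (w, u) \<in> gE G a"

fun path :: "('u, 'e, 's) gseq \<Rightarrow> 'u \<Rightarrow> 'e letter list \<Rightarrow> 'u \<Rightarrow> bool" where
  "path G u [] w \<longleftrightarrow> u = w"
| "path G u (x # s) w \<longleftrightarrow> (\<exists>v. lstep G u x v \<and> path G v s w)"

definition path_lang :: "('u, 'e, 's) gseq \<Rightarrow> 'u \<Rightarrow> 'e letter list set \<Rightarrow> 'u \<Rightarrow> bool" where
  "path_lang G u L w \<longleftrightarrow> (\<exists>s\<in>L. path G u s w)"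

text \<open>A constraint: vertices, (directed) edges, and a label G'(a) on each edge,
  represented as the pair (G', a).\<close>
record ('u, 'e) constraint =
  cV :: "'u set"
  cE :: "('u \<times> 'u) set"
  cL :: "'u \<times> 'u \<Rightarrow> 'e production set \<times> 'e"

definition is_tree :: "'u set \<Rightarrow> ('u \<times> 'u) set \<Rightarrow> bool" where
  "is_tree V E \<longleftrightarrow> finite V \<and> V \<noteq> {} \<and> E \<subseteq> V \<times> V
     \<and> (\<forall>w u. (w, u) \<in> E \<longrightarrow> w \<noteq> u \<and> (u, w) \<notin> E)
     \<and> card E + 1 = card V
     \<and> (\<forall>x\<in>V. \<forall>y\<in>V. (x, y) \<in> (E \<union> E\<inverse>)\<^sup>*)"

definition constraint_wf :: "('u, 'e) constraint \<Rightarrow> bool" where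
  "constraint_wf C \<longleftrightarrow> is_tree (cV C) (cE C) \<and> (\<forall>e\<in>cE C. is_Esys (fst (cL C e)))"

definition satisfies :: "('u, 'e, 's) gseq \<Rightarrow> ('u, 'e) constraint \<Rightarrow> bool" where
  "satisfies G C \<longleftrightarrow> cV C \<subseteq> gV G \<and>
     (\<forall>w u. (w, u) \<in> cE C \<longrightarrow>
        path_lang G w (lang (fst (cL C (w, u))) [Fwd (snd (cL C (w, u)))]) u)"

text \<open>Sequent constraints R \<subseteq> S^n \<times> 2^PS, lists of length n.\<close>
definition sat_seqc :: "('s list \<times> ('u \<times> 's) set) set \<Rightarrow> 's list \<Rightarrow> ('u \<times> 's) set \<Rightarrow> bool" where
  "sat_seqc R Ss D \<longleftrightarrow> (\<exists>l. mset l = mset Ss \<and> (l, D) \<in> R)"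

definition init_concl :: "('u, 'e) constraint \<Rightarrow> ('s list \<times> ('u \<times> 's) set) set
    \<Rightarrow> ('u, 'e, 's) gseq \<Rightarrow> bool" where
  "init_concl C R G \<longleftrightarrow> gseq_wf G \<and> satisfies G C \<and>
     (\<exists>ws. distinct ws \<and> set ws = cV C \<and>
        sat_seqc R (map (gL G) ws) (Delta G - {(w, gL G w) | w. w \<in> cV C}))"

definition Gsys_init :: "('u, 'e) constraint \<Rightarrow> 'e production set" where
  "Gsys_init C = (\<Union>e\<in>cE C. fst (cL C e))"

definition fracture :: "('u, 'e) constraint \<Rightarrow> 'e production set \<Rightarrow> ('u, 'e) constraint" where
  "fracture C G = C\<lparr>cL := (\<lambda>e. (fst (cL C e) - G, snd (cL C e)))\<rparr>"

text \<open>HF a s: forward Horn rule (a --> s); HB a s: backward Horn rule (a-bar --> s).\<close>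
datatype 'e horn = HF 'e "'e letter list" | HB 'e "'e letter list"

fun Gh :: "'e horn \<Rightarrow> 'e production set" where
  "Gh (HF a s) = {(Fwd a, s), (Bwd a, bars s)}"
| "Gh (HB a s) = {(Bwd a, s), (Fwd a, bars s)}"

definition GH :: "'e horn set \<Rightarrow> 'e production set" where
  "GH H = (\<Union>h\<in>H. Gh h)"

fun horn_of :: "'e production \<Rightarrow> 'e horn" where
  "horn_of (Fwd a, s) = HF a s"
| "horn_of (Bwd a, s) = HB a s"

definition Hset :: "'e production set \<Rightarrow> 'e horn set" where
  "Hset G = horn_of ` G"

text \<open>Application of a Horn rule: premise P, conclusion Q (commas = disjoint union).\<close>
fun horn_app :: "'e horn \<Rightarrow> ('u, 'e, 's) gseq \<Rightarrow> ('u, 'e, 's) gseq \<Rightarrow> bool" where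
  "horn_app (HF a s) P Q \<longleftrightarrow> gseq_wf P \<and> gseq_wf Q \<and> gV P = gV Q \<and> gL P = gL Q \<and>
     (\<exists>w u. path Q w s u \<and> (w, u) \<notin> gE Q a \<and>
        gE P = (gE Q)(a := gE Q a \<union> {(w, u)}))"
| "horn_app (HB a s) P Q \<longleftrightarrow> gseq_wf P \<and> gseq_wf Q \<and> gV P = gV Q \<and> gL P = gL Q \<and>
     (\<exists>w u. path Q w s u \<and> (u, w) \<notin> gE Q a \<and>
        gE P = (gE Q)(a := gE Q a \<union> {(u, w)}))"

definition horn_derives :: "'e horn set \<Rightarrow> ('u, 'e, 's) gseq \<Rightarrow> ('u, 'e, 's) gseq \<Rightarrow> bool" where
  "horn_derives H = (\<lambda>P Q. \<exists>h\<in>H. horn_app h P Q)\<^sup>*\<^sup>*"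

text \<open>Production pairs are represented as the sets {p, p-bar}. For distinct pairs,
  P \<sqsubset> P' iff for p = x --> s in P and p' = y --> t in P', s or s-bar contains y.\<close>
definition pdep :: "'e production set \<Rightarrow> 'e production set \<Rightarrow> bool" where
  "pdep P P' \<longleftrightarrow> P \<noteq> P' \<and> (\<exists>x s y t. (x, s) \<in> P \<and> (y, t) \<in> P' \<and>
      (y \<in> set s \<or> y \<in> set (bars s)))"

definition dg_le :: "'e horn set \<Rightarrow> 'e horn \<Rightarrow> 'e horn \<Rightarrow> bool" where
  "dg_le H h h' \<longleftrightarrow>
     (\<lambda>P P'. P \<in> Gh ` H \<and> P' \<in> Gh ` H \<and> pdep P P')\<^sup>*\<^sup>* (Gh h) (Gh h')"

definition fracturable :: "'e horn set \<Rightarrow> 'e horn set \<Rightarrow> bool" where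
  "fracturable H H' \<longleftrightarrow> H' \<subseteq> H \<and>
     \<not> (\<exists>v\<in>H'. \<exists>v'\<in>H - H'. dg_le H v v')"

end

theory Submission
  imports Defs
begin

lemma barl_barl[simp]: "barl (barl x) = x" by (cases x) auto
lemma bars_bars[simp]: "bars (bars s) = s"
  by (simp add: bars_def rev_map comp_def)

lemma Gh_horn_of: "p \<in> Gh h \<Longrightarrow> Gh (horn_of p) = Gh h"
  by (cases h) auto

lemma p_in_Gh_horn_of: "p \<in> Gh (horn_of p)"
proof (cases p)
  case (Pair x t) then show ?thesis by (cases x) auto
qed

lemma clo:
  assumes fr: "fracturable H H'" and HH: "H = Hset Gs"
    and xr: "(x,r) \<in> GH H'" and y: "y \<in> set r" and yt: "(y,t) \<in> Gs"
  shows "(y,t) \<in> GH H'"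
proof -
  obtain h where h: "h \<in> H'" "(x,r) \<in> Gh h" using xr by (auto simp: GH_def)
  define h' where "h' = horn_of (y,t)"
  have h'H: "h' \<in> H" using yt HH by (auto simp: Hset_def h'_def)
  have hH: "h \<in> H" using h fr by (auto simp: fracturable_def)
  have yth: "(y,t) \<in> Gh h'" using p_in_Gh_horn_of h'_def by metis
  have "dg_le H h h'"
  proof (cases "Gh h = Gh h'")
    case True then show ?thesis by (simp add: dg_le_def)
  next
    case False
    have "pdep (Gh h) (Gh h')" unfolding pdep_def using False h(2) yth y by blast
    then show ?thesis unfolding dg_le_def using hH h'H by (intro r_into_rtranclp) auto
  qed
  then have "h' \<in> H'" using fr h(1) h'H by (auto simp: fracturable_def)
  then show ?thesis using yth by (auto simp: GH_def)
qed

lemma horn_of_in: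
  assumes fr: "fracturable H H'" and HH: "H = Hset Gs"
    and p: "p \<in> Gs" "p \<in> GH H'"
  shows "horn_of p \<in> H'"
proof -
  obtain h where h: "h \<in> H'" "p \<in> Gh h" using p by (auto simp: GH_def)
  have h'H: "horn_of p \<in> H" using p HH by (auto simp: Hset_def)
  have "dg_le H h (horn_of p)" using Gh_horn_of[OF h(2)] by (simp add: dg_le_def)
  then show ?thesis using fr h(1) h'H by (auto simp: fracturable_def)
qed

lemma rw_stepI: "(x,r) \<in> P \<Longrightarrow> rw_step P (xs@[x]@ys) (xs@r@ys)"
  unfolding rw_step_def by blast

lemma swap:
  assumes s1: "rw_step P1 u v" and s2: "rw_step N v w"
    and nz: "\<And>x r z q. (x,r) \<in> P1 \<Longrightarrow> (z,q) \<in> N \<Longrightarrow> z \<notin> set r"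
  shows "\<exists>v'. rw_step N u v' \<and> rw_step P1 v' w"
proof -
  obtain xs x ys r where A: "u = xs@[x]@ys" "(x,r) \<in> P1" "v = xs@r@ys"
    using s1 unfolding rw_step_def by blast
  obtain as z bs q where B: "v = as@[z]@bs" "(z,q) \<in> N" "w = as@q@bs"
    using s2 unfolding rw_step_def by blast
  have zr: "z \<notin> set r" using nz A(2) B(2) by blast
  have eq: "xs@(r@ys) = as@(z#bs)" using A B by simp
  then obtain us where "(xs = as@us \<and> us@r@ys = z#bs) \<or> (xs@us = as \<and> r@ys = us@z#bs)"
    using append_eq_append_conv2[of xs "r@ys" as "z#bs"] by auto
  then show ?thesis
  proof
    assume c: "xs = as@us \<and> us@r@ys = z#bs"
    show ?thesis
    proof (cases us)
      case Nil
      with c zr have "r = []" by (cases r) auto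
      with c Nil have "ys = z#bs" "xs = as" by auto
      then show ?thesis using A B \<open>r = []\<close>
        rw_stepI[OF B(2), of "as@[x]" bs] rw_stepI[OF A(2), of as "q@bs"] by auto
    next
      case (Cons z' us')
      with c have "z' = z" "bs = us'@r@ys" "xs = as@z#us'" by auto
      then show ?thesis using A B
        rw_stepI[OF B(2), of as "us'@[x]@ys"] rw_stepI[OF A(2), of "as@q@us'" ys] by auto
    qed
  next
    assume c: "xs@us = as \<and> r@ys = us@z#bs"
    then obtain vs where "(r = us@vs \<and> vs@ys = z#bs) \<or> (r@vs = us \<and> ys = vs@z#bs)"
      using append_eq_append_conv2[of r ys us "z#bs"] by auto
    then show ?thesis
    proof
      assume d: "r = us@vs \<and> vs@ys = z#bs"
      show ?thesis
      proof (cases vs)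
        case Nil
        with d c have "r = us" "ys = z#bs" "as = xs@r" by auto
        then show ?thesis using A B
          rw_stepI[OF B(2), of "xs@[x]" bs] rw_stepI[OF A(2), of xs "q@bs"] by auto
      next
        case (Cons z' vs')
        with d zr show ?thesis by auto
      qed
    next
      assume d: "r@vs = us \<and> ys = vs@z#bs"
      then show ?thesis using A B c
        rw_stepI[OF B(2), of "xs@[x]@vs" bs] rw_stepI[OF A(2), of xs "vs@q@bs"] by auto
    qed
  qed
qed

lemma postpone:
  assumes "(rw_step P1)\<^sup>*\<^sup>* u v" "rw_step N v w"
    and nz: "\<And>x r z q. (x,r) \<in> P1 \<Longrightarrow> (z,q) \<in> N \<Longrightarrow> z \<notin> set r"
  shows "\<exists>v'. rw_step N u v' \<and> (rw_step P1)\<^sup>*\<^sup>* v' w"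
  using assms(1,2)
proof (induction rule: converse_rtranclp_induct)
  case base then show ?case by auto
next
  case (step u u1)
  then obtain v1 where "rw_step N u1 v1" "(rw_step P1)\<^sup>*\<^sup>* v1 w" by blast
  moreover obtain v' where "rw_step N u v'" "rw_step P1 v' v1"
    using swap[OF step(1) calculation(1)] nz by blast
  ultimately show ?case
    using converse_rtranclp_into_rtranclp[of "rw_step P1" v' v1 w] by blast
qed

lemma rw_step_split:
  "rw_step G s t \<Longrightarrow> rw_step (G - X) s t \<or> rw_step (G \<inter> X) s t"
  unfolding rw_step_def by blast

lemma decomp:
  assumes "(rw_step G)\<^sup>*\<^sup>* s0 s"
    and nz: "\<And>x r z q. (x,r) \<in> G \<inter> X \<Longrightarrow> (z,q) \<in> G - X \<Longrightarrow> z \<notin> set r"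
  shows "\<exists>s'. (rw_step (G - X))\<^sup>*\<^sup>* s0 s' \<and> (rw_step (G \<inter> X))\<^sup>*\<^sup>* s' s"
  using assms(1)
proof (induction rule: rtranclp_induct)
  case base then show ?case by auto
next
  case (step s s2)
  then obtain s' where a: "(rw_step (G - X))\<^sup>*\<^sup>* s0 s'" "(rw_step (G \<inter> X))\<^sup>*\<^sup>* s' s" by blast
  from rw_step_split[OF step(2)] show ?case
  proof
    assume "rw_step (G - X) s s2"
    from postpone[OF a(2) this] nz obtain v' where
      "rw_step (G - X) s' v'" "(rw_step (G \<inter> X))\<^sup>*\<^sup>* v' s2" by blast
    then show ?thesis using a(1) rtranclp.rtrancl_into_rtrancl[of "rw_step (G - X)" s0 s' v'] by blast
  next
    assume "rw_step (G \<inter> X) s s2"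
    with a show ?thesis using rtranclp.rtrancl_into_rtrancl[of "rw_step (G \<inter> X)" s' s s2] by blast
  qed
qed

definition ext :: "'e horn set \<Rightarrow> ('u,'e,'s) gseq \<Rightarrow> ('u,'e,'s) gseq \<Rightarrow> bool" where
  "ext H' Q' Q \<longleftrightarrow> horn_derives H' Q' Q \<and> gV Q' = gV Q \<and> gL Q' = gL Q
     \<and> (\<forall>a. gE Q a \<subseteq> gE Q' a) \<and> gseq_wf Q'"

lemma ext_refl: "gseq_wf Q \<Longrightarrow> ext H' Q Q"
  by (simp add: ext_def horn_derives_def)

lemma ext_trans: "ext H' Q2 Q1 \<Longrightarrow> ext H' Q1 Q \<Longrightarrow> ext H' Q2 Q"
  unfolding ext_def horn_derives_def
  apply (elim conjE, intro conjI)
      apply (rule rtranclp_trans, assumption, assumption)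
  by (auto, meson subsetD)

lemma path_mono: "(\<forall>a. gE Q a \<subseteq> gE Q' a) \<Longrightarrow> path Q v s v' \<Longrightarrow> path Q' v s v'"
proof (induction s arbitrary: v)
  case Nil then show ?case by simp
next
  case (Cons x s)
  then obtain m where "lstep Q v x m" "path Q m s v'" by auto
  moreover have "lstep Q' v x m" using Cons.prems(1) calculation(1) by (cases x) auto
  ultimately show ?case using Cons by auto
qed

lemma path_append: "path Q v (s1@s2) v' \<longleftrightarrow> (\<exists>m. path Q v s1 m \<and> path Q m s2 v')"
  by (induction s1 arbitrary: v) auto

lemma path_end: "gseq_wf Q \<Longrightarrow> v \<in> gV Q \<Longrightarrow> path Q v s v' \<Longrightarrow> v' \<in> gV Q"
proof (induction s arbitrary: v)
  case Nil then show ?case by simp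
next
  case (Cons x s)
  then obtain m where m: "lstep Q v x m" "path Q m s v'" by auto
  have "m \<in> gV Q" using m(1) Cons.prems(1) by (cases x) (auto simp: gseq_wf_def)
  then show ?case using Cons m by auto
qed

lemma horn_step:
  assumes wf: "gseq_wf Q" and v: "v \<in> gV Q" and p: "path Q v t v'"
    and hin: "horn_of (x,t) \<in> H'"
  shows "\<exists>Q'. ext H' Q' Q \<and> lstep Q' v x v'"
proof -
  have v': "v' \<in> gV Q" using path_end[OF wf v p] .
  show ?thesis
  proof (cases x)
    case (Fwd a)
    show ?thesis
    proof (cases "(v,v') \<in> gE Q a")
      case True then show ?thesis using ext_refl[OF wf] Fwd by auto
    next
      case False
      define Q' where "Q' = Q\<lparr>gE := (gE Q)(a := gE Q a \<union> {(v,v')})\<rparr>"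
      have wf': "gseq_wf Q'" using wf v v' by (auto simp: gseq_wf_def Q'_def)
      have "horn_app (HF a t) Q' Q" using wf wf' p False by (auto simp: Q'_def)
      moreover have "HF a t \<in> H'" using hin Fwd by simp
      ultimately have "\<exists>h\<in>H'. horn_app h Q' Q" by blast
      then have "horn_derives H' Q' Q" unfolding horn_derives_def
        using r_into_rtranclp[of "\<lambda>P Q. \<exists>h\<in>H'. horn_app h P Q" Q' Q] by simp
      then show ?thesis using wf' Fwd by (auto simp: ext_def Q'_def)
    qed
  next
    case (Bwd a)
    show ?thesis
    proof (cases "(v',v) \<in> gE Q a")
      case True then show ?thesis using ext_refl[OF wf] Bwd by auto
    next
      case False
      define Q' where "Q' = Q\<lparr>gE := (gE Q)(a := gE Q a \<union> {(v',v)})\<rparr>"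
      have wf': "gseq_wf Q'" using wf v v' by (auto simp: gseq_wf_def Q'_def)
      have "horn_app (HB a t) Q' Q" using wf wf' p False by (auto simp: Q'_def)
      moreover have "HB a t \<in> H'" using hin Bwd by simp
      ultimately have "\<exists>h\<in>H'. horn_app h Q' Q" by blast
      then have "horn_derives H' Q' Q" unfolding horn_derives_def
        using r_into_rtranclp[of "\<lambda>P Q. \<exists>h\<in>H'. horn_app h P Q" Q' Q] by simp
      then show ?thesis using wf' Bwd by (auto simp: ext_def Q'_def)
    qed
  qed
qed

lemma lemB:
  assumes "(rw_step P1)\<^sup>*\<^sup>* s t"
    and hin: "\<And>p. p \<in> P1 \<Longrightarrow> horn_of p \<in> H'"
  shows "gseq_wf Q \<Longrightarrow> v \<in> gV Q \<Longrightarrow> path Q v t v' \<Longrightarrow> \<exists>Q'. ext H' Q' Q \<and> path Q' v s v'"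
  using assms(1)
proof (induction arbitrary: Q rule: converse_rtranclp_induct)
  case base then show ?case using ext_refl by blast
next
  case (step s s1)
  obtain Q1 where Q1: "ext H' Q1 Q" "path Q1 v s1 v'" using step by blast
  obtain xs x ys r where A: "s = xs@[x]@ys" "(x,r) \<in> P1" "s1 = xs@r@ys"
    using step(1) unfolding rw_step_def by blast
  obtain m1 m2 where m: "path Q1 v xs m1" "path Q1 m1 r m2" "path Q1 m2 ys v'"
    using Q1(2) A(3) by (auto simp: path_append)
  have wf1: "gseq_wf Q1" and V1: "gV Q1 = gV Q" using Q1(1) by (auto simp: ext_def)
  have "v \<in> gV Q1" using step V1 by simp
  then have m1V: "m1 \<in> gV Q1" using path_end[OF wf1 _ m(1)] by simp
  obtain Q2 where Q2: "ext H' Q2 Q1" "lstep Q2 m1 x m2"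
    using horn_step[OF wf1 m1V m(2) hin[OF A(2)]] by blast
  have mono: "\<forall>a. gE Q1 a \<subseteq> gE Q2 a" using Q2(1) by (auto simp: ext_def)
  have "path Q2 v s v'" using A(1) Q2(2) path_mono[OF mono m(1)] path_mono[OF mono m(3)]
    by (auto simp: path_append)
  then show ?case using ext_trans[OF Q2(1) Q1(1)] by blast
qed

theorem mainTheorem8:
  fixes C :: "('u, 'e::finite) constraint"
    and R :: "('s::countable list \<times> ('u \<times> 's) set) set"
    and H H' :: "'e horn set"
  assumes "infinite (UNIV :: 's set)"
    and "constraint_wf C"
    and "\<forall>(l, D)\<in>R. length l = card (cV C)"
    and "H = Hset (Gsys_init C)"
    and "fracturable H H'"
  shows "\<forall>G :: ('u, 'e, 's) gseq. init_concl C R G \<longrightarrow>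
           (\<exists>G0. init_concl (fracture C (GH H')) R G0 \<and> horn_derives H' G0 G)"
proof (intro allI impI)
  fix G :: "('u, 'e, 's) gseq"
  assume ic: "init_concl C R G"
  have wf: "gseq_wf G" and sat: "satisfies G C" using ic by (auto simp: init_concl_def)
  have finE: "finite (cE C)" using assms(2)
    by (auto simp: constraint_wf_def is_tree_def intro: finite_subset[of _ "cV C \<times> cV C"])
  let ?N = "\<lambda>e. fst (cL C e) - GH H'"
  have one: "\<exists>Q'. ext H' Q' Q \<and> path_lang Q' w (lang (?N (w,u)) [Fwd (snd (cL C (w,u)))]) u"
    if we: "(w,u) \<in> cE C" and Qe: "ext H' Q G" for Q w u
  proof -
    let ?G' = "fst (cL C (w,u))" and ?a = "snd (cL C (w,u))"
    have sub: "?G' \<subseteq> Gsys_init C" using we by (auto simp: Gsys_init_def)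
    have "path_lang G w (lang ?G' [Fwd ?a]) u" using sat we unfolding satisfies_def by blast
    then obtain s where s: "(rw_step ?G')\<^sup>*\<^sup>* [Fwd ?a] s" "path G w s u"
      unfolding path_lang_def lang_def by blast
    have nz: "z \<notin> set r" if "(x,r) \<in> ?G' \<inter> GH H'" "(z,q) \<in> ?G' - GH H'" for x r z q
      using clo[OF assms(5) assms(4), of x r z q] that sub by blast
    obtain s' where s': "(rw_step (?N (w,u)))\<^sup>*\<^sup>* [Fwd ?a] s'" "(rw_step (?G' \<inter> GH H'))\<^sup>*\<^sup>* s' s"
      using decomp[OF s(1), of "GH H'"] nz by blast
    have hin: "horn_of p \<in> H'" if "p \<in> ?G' \<inter> GH H'" for p
      using horn_of_in[OF assms(5) assms(4)] that sub by blast
    have wfQ: "gseq_wf Q" and VQ: "gV Q = gV G" and mQ: "\<forall>a. gE G a \<subseteq> gE Q a"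
      using Qe by (auto simp: ext_def)
    have wV: "w \<in> gV Q" using sat we VQ assms(2)
      by (auto simp: satisfies_def constraint_wf_def is_tree_def)
    obtain Q' where "ext H' Q' Q" "path Q' w s' u"
      using lemB[OF s'(2) hin wfQ wV path_mono[OF mQ s(2)]] by blast
    then show ?thesis using s'(1) by (auto simp: path_lang_def lang_def)
  qed
  have "\<exists>Q. ext H' Q G \<and> (\<forall>(w,u)\<in>F. path_lang Q w (lang (?N (w,u)) [Fwd (snd (cL C (w,u)))]) u)"
    if "finite F" "F \<subseteq> cE C" for F
    using that
  proof (induction F rule: finite_induct)
    case empty then show ?case using ext_refl[OF wf] by auto
  next
    case (insert e F)
    then obtain Q where Q: "ext H' Q G"
      "\<forall>(w,u)\<in>F. path_lang Q w (lang (?N (w,u)) [Fwd (snd (cL C (w,u)))]) u" by auto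
    obtain w u where e: "e = (w,u)" by (cases e)
    obtain Q' where Q': "ext H' Q' Q"
      "path_lang Q' w (lang (?N (w,u)) [Fwd (snd (cL C (w,u)))]) u"
      using one[of w u Q] insert.prems e Q(1) ext_trans by blast
    have mono: "\<forall>a. gE Q a \<subseteq> gE Q' a" using Q'(1) by (auto simp: ext_def)
    have "\<forall>(w,u)\<in>F. path_lang Q' w (lang (?N (w,u)) [Fwd (snd (cL C (w,u)))]) u"
      using Q(2) path_mono[OF mono] by (fastforce simp: path_lang_def)
    then show ?case using Q' e ext_trans[OF Q'(1) Q(1)] by auto
  qed
  from this[OF finE order_refl] obtain G0 where G0: "ext H' G0 G"
    "\<forall>(w,u)\<in>cE C. path_lang G0 w (lang (?N (w,u)) [Fwd (snd (cL C (w,u)))]) u" by blast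
  have eqs: "gV G0 = gV G" "gL G0 = gL G" "gseq_wf G0" "horn_derives H' G0 G"
    using G0(1) by (auto simp: ext_def)
  have "Delta G0 = Delta G" using eqs by (simp add: Delta_def)
  then have "init_concl (fracture C (GH H')) R G0"
    using ic G0(2) eqs unfolding init_concl_def satisfies_def
    by (auto simp: fracture_def)
  then show "\<exists>G0. init_concl (fracture C (GH H')) R G0 \<and> horn_derives H' G0 G"
    using eqs by blast
qed

end
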